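(* Let $\hat f(\mathbf z,\bar{\mathbf z})$ be a mixed polynomial in $\mathbf z=(z_1,z_2)$ and let $f(z_1,\bar z_1)=\hat f(z_1,0,\bar z_1,0)$. Let $g(\mathbf z,\bar{\mathbf z})=z_2$, $C=\{\hat f=0\}$, $C'=\{z_2=0\}$. Let $\alpha\in\mathbb C$ be an isolated root of $f$ and $\hat\alpha=(\alpha,0)$. Then $\hat\alpha\in C\cap C'$ and $I_{top}(C,C';\hat\alpha)=\operatorname{sm}(f,\alpha)$.
   Context: For a mixed polynomial $h(u,\bar u)$ in one variable with isolated root $\alpha$ (i.e. $h(\alpha,\bar\alpha)=0$ and $h\ne0$ near $\alpha$ otherwise), the multiplicity with sign $\operatorname{sm}(h,\alpha)$ is the mapping degree (rotation number) of $h/|h|:S^1_\varepsilon(\alpha)\to S^1$ for small $\varepsilon>0$, where $S^1_\varepsilon(\alpha)=\{|u-\alpha|=\varepsilon\}$ is oriented counterclockwise. For an isolated point $P$ of $C\cap C'$, identifying $\mathbb C^2$ with $\mathbb R^4$ via $z_j=x_j+iy_j$ (standard orientation) and writing $\hat f=\hat f_{\mathbb R}+i\hat f_I$, $g=g_{\mathbb R}+ig_I$, $I_{top}(C,C';P)$ is the mapping degree of $\varphi/\|\varphi\|:S^3_\varepsilon(P)\to S^3$ with $\varphi=(\hat f_{\mathbb R},\hat f_I,g_{\mathbb R},g_I)$ and $S^3_\varepsilon(P)$ the boundary of a small ball around $P$ containing no other intersection point. *)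

theory Defs
  imports "HOL-Analysis.Analysis" "HOL-Homology.Homology"
begin

text \<open>A mixed polynomial in z = (z1,z2) is given by finitely supported complex
coefficients c(a,b,p,q) of the monomials z1^a z2^b conj(z1)^p conj(z2)^q.\<close>

type_synonym mixed_poly2 = "nat \<times> nat \<times> nat \<times> nat \<Rightarrow> complex"

definition mixed_poly2 :: "mixed_poly2 \<Rightarrow> bool" where
  "mixed_poly2 c \<longleftrightarrow> finite {m. c m \<noteq> 0}"

definition meval2 :: "mixed_poly2 \<Rightarrow> complex \<Rightarrow> complex \<Rightarrow> complex" where
  "meval2 c z1 z2 = (\<Sum>(a,b,p,q)\<in>{m. c m \<noteq> 0}.
      c (a,b,p,q) * z1 ^ a * z2 ^ b * cnj z1 ^ p * cnj z2 ^ q)"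

definition isolated_root :: "(complex \<Rightarrow> complex) \<Rightarrow> complex \<Rightarrow> bool" where
  "isolated_root h \<alpha> \<longleftrightarrow> h \<alpha> = 0 \<and>
     (\<exists>e>0. \<forall>u. 0 < cmod (u - \<alpha>) \<and> cmod (u - \<alpha>) < e \<longrightarrow> h u \<noteq> 0)"

text \<open>Degree of h/|h| on the circle |u - alpha| = eps, via the Brouwer degree of
the induced self-map of the standard 1-sphere (coordinates (Re, Im), standard
counterclockwise orientation on both sides).\<close>
definition circle_deg :: "(complex \<Rightarrow> complex) \<Rightarrow> complex \<Rightarrow> real \<Rightarrow> int" where
  "circle_deg h \<alpha> \<epsilon> = Brouwer_degree2 1 (\<lambda>x.
     let w = h (\<alpha> + of_real \<epsilon> * Complex (x 0) (x 1)); v = w / of_real (cmod w)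
     in (\<lambda>i. if i = 0 then Re v else if i = 1 then Im v else 0))"

definition sm :: "(complex \<Rightarrow> complex) \<Rightarrow> complex \<Rightarrow> int" where
  "sm h \<alpha> = (THE d. \<forall>\<^sub>F \<epsilon> in at_right 0. circle_deg h \<alpha> \<epsilon> = d)"

text \<open>Degree of phi/||phi|| on the 3-sphere of radius eps around P = (P1,P2), where
C^2 = R^4 via (x1,y1,x2,y2) and phi = (Re F, Im F, Re G, Im G).\<close>
definition sphere3_deg :: "(complex \<Rightarrow> complex \<Rightarrow> complex) \<Rightarrow> (complex \<Rightarrow> complex \<Rightarrow> complex)
     \<Rightarrow> complex \<times> complex \<Rightarrow> real \<Rightarrow> int" where
  "sphere3_deg F G P \<epsilon> = Brouwer_degree2 3 (\<lambda>x.
     let z1 = fst P + of_real \<epsilon> * Complex (x 0) (x 1);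
         z2 = snd P + of_real \<epsilon> * Complex (x 2) (x 3);
         u = F z1 z2; w = G z1 z2;
         n = sqrt ((Re u)\<^sup>2 + (Im u)\<^sup>2 + (Re w)\<^sup>2 + (Im w)\<^sup>2)
     in (\<lambda>i. if i = 0 then Re u / n else if i = 1 then Im u / n
             else if i = 2 then Re w / n else if i = 3 then Im w / n else 0))"

definition I_top :: "(complex \<Rightarrow> complex \<Rightarrow> complex) \<Rightarrow> (complex \<Rightarrow> complex \<Rightarrow> complex)
     \<Rightarrow> complex \<times> complex \<Rightarrow> int" where
  "I_top F G P = (THE d. \<forall>\<^sub>F \<epsilon> in at_right 0. sphere3_deg F G P \<epsilon> = d)"

end

theory Submission
  imports Defs
begin

lemma susp_core:
  fixes f :: "(nat \<Rightarrow> real) \<Rightarrow> nat \<Rightarrow> real"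
  assumes cf: "continuous_map (nsphere (Suc n)) (nsphere (Suc n)) f"
   and fU: "f \<in> {x. x (Suc n) \<ge> 0} \<rightarrow> {x. x (Suc n) \<ge> 0}"
   and fL: "f \<in> {x. x (Suc n) \<le> 0} \<rightarrow> {x. x (Suc n) \<le> 0}"
  shows "Brouwer_degree2 (Suc n) f = Brouwer_degree2 n f"
proof -
  let ?S = "nsphere (Suc n)"
  define U where "U = subtopology ?S {x. x (Suc n) \<ge> 0}"
  define E where "E = {x::nat\<Rightarrow>real. x (Suc n) = 0}"
  define L where "L = {x::nat\<Rightarrow>real. x (Suc n) \<le> 0}"
  define q where "q = int (Suc n)"
  define G where "G = reduced_homology_group q ?S"
  define R where "R = relative_homology_group q ?S L"
  define Q where "Q = relative_homology_group q U E"
  define H where "H = reduced_homology_group (int n) (nsphere n)"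
  define j where "j = hom_induced q ?S {} ?S L id"
  define i where "i = hom_induced q U E ?S L id"
  define b where "b = hom_boundary q U E"
  define d where "d = Brouwer_degree2 n f"
  have q1: "q = 1 + int n" by (simp add: q_def)
  have jiso: "j \<in> iso G R"
    unfolding j_def G_def R_def L_def by (rule iso_reduced_homology_group_lower_hemisphere) simp
  have iiso: "i \<in> iso Q R"
    unfolding i_def Q_def R_def L_def U_def E_def by (rule iso_relative_homology_group_upper_hemisphere)
  have biso: "b \<in> iso Q H"
    unfolding b_def Q_def H_def U_def E_def q1 by (rule iso_upper_hemisphere_reduced_homology_group)
  have fE: "f \<in> E \<rightarrow> E"
  proof
    fix x assume "x \<in> E"
    then have "x \<in> {x. x (Suc n) \<ge> 0}" "x \<in> {x. x (Suc n) \<le> 0}" by (auto simp: E_def)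
    then have "f x (Suc n) \<ge> 0" "f x (Suc n) \<le> 0" using fU fL by (auto simp: Pi_iff)
    then show "f x \<in> E" by (simp add: E_def)
  qed
  have UE: "subtopology U E = nsphere n"
  proof -
    have "{x. 0 \<le> x (Suc n)} \<inter> {x. x (Suc n) = 0} = {x. x (Suc n) = (0::real)}" by auto
    then show ?thesis unfolding U_def E_def
      by (simp add: subtopology_nsphere_equator subtopology_subtopology)
  qed
  have cU: "continuous_map U U f"
    unfolding U_def using cf fU
    by (auto simp: continuous_map_in_subtopology continuous_map_from_subtopology Pi_iff)
  have cUS: "continuous_map U ?S f"
    unfolding U_def using cf by (simp add: continuous_map_from_subtopology)
  have cUSid: "continuous_map U ?S id"
    unfolding U_def by (simp add: continuous_map_from_subtopology)
  have EL: "id \<in> E \<rightarrow> L" unfolding E_def L_def by auto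
  have fL': "f \<in> L \<rightarrow> L" using fL unfolding L_def .
  have c1: "j (hom_induced q ?S {} ?S {} f y) = hom_induced q ?S L ?S L f (j y)" for y
  proof -
    have "j (hom_induced q ?S {} ?S {} f y) = hom_induced q ?S {} ?S L (id \<circ> f) y"
      unfolding j_def by (rule hom_induced_compose') (use cf in auto)
    also have "\<dots> = hom_induced q ?S {} ?S L (f \<circ> id) y" by simp
    also have "\<dots> = hom_induced q ?S L ?S L f (j y)"
      unfolding j_def by (rule hom_induced_compose' [symmetric]) (use cf fL' in auto)
    finally show ?thesis .
  qed
  have c2: "i (hom_induced q U E U E f u) = hom_induced q ?S L ?S L f (i u)" for u
  proof -
    have "i (hom_induced q U E U E f u) = hom_induced q U E ?S L (id \<circ> f) u"
      unfolding i_def by (rule hom_induced_compose') (use cU fE cUSid EL in auto)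
    also have "\<dots> = hom_induced q U E ?S L (f \<circ> id) u" by simp
    also have "\<dots> = hom_induced q ?S L ?S L f (i u)"
      unfolding i_def by (rule hom_induced_compose' [symmetric]) (use cf fL' cUSid EL in auto)
    finally show ?thesis .
  qed
  have c3: "b (hom_induced q U E U E f u) = hom_induced (int n) (nsphere n) {} (nsphere n) {} f (b u)" for u
    using fun_cong [OF naturality_hom_induced [OF cU fE, of q], of u]
    by (simp add: b_def UE q1)
  have "hom_induced q ?S {} ?S {} f y = y [^]\<^bsub>G\<^esub> d" if y: "y \<in> carrier G" for y
  proof -
    interpret G: group G by (simp add: G_def)
    interpret R: group R by (simp add: R_def)
    interpret Q: group Q by (simp add: Q_def)
    interpret H: group H by (simp add: H_def)
    have jh: "group_hom G R j" using jiso by (simp add: group_hom_def group_hom_axioms_def iso_iff G.is_group R.is_group)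
    have ih: "group_hom Q R i" using iiso by (simp add: group_hom_def group_hom_axioms_def iso_iff Q.is_group R.is_group)
    have bh: "group_hom Q H b" using biso by (simp add: group_hom_def group_hom_axioms_def iso_iff Q.is_group H.is_group)
    have jI: "j \<in> hom G R" "j ` carrier G = carrier R" "inj_on j (carrier G)"
      using jiso unfolding iso_iff by blast+
    have iI: "i \<in> hom Q R" "i ` carrier Q = carrier R" "inj_on i (carrier Q)"
      using iiso unfolding iso_iff by blast+
    have bI: "b \<in> hom Q H" "b ` carrier Q = carrier H" "inj_on b (carrier Q)"
      using biso unfolding iso_iff by blast+
    have jy: "j y \<in> carrier R" using jI(2) y by blast
    then obtain u where u: "u \<in> carrier Q" and iu: "i u = j y" using iI(2)
      by (metis imageE)
    have Fu: "hom_induced q U E U E f u \<in> carrier Q" by (simp add: Q_def hom_induced_carrier)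
    have bu: "b u \<in> carrier H" using bI(2) u by blast
    have "b (hom_induced q U E U E f u) = b u [^]\<^bsub>H\<^esub> d"
      unfolding c3 d_def using bu by (simp add: H_def Brouwer_degree2)
    also have "\<dots> = b (u [^]\<^bsub>Q\<^esub> d)" using group_hom.hom_int_pow [OF bh u] by simp
    finally have "hom_induced q U E U E f u = u [^]\<^bsub>Q\<^esub> d"
      using bI(3) Fu u Q.int_pow_closed by (meson inj_onD)
    then have "hom_induced q ?S L ?S L f (j y) = j y [^]\<^bsub>R\<^esub> d"
      using c2 [of u] iu group_hom.hom_int_pow [OF ih u] by simp
    also have "\<dots> = j (y [^]\<^bsub>G\<^esub> d)" using group_hom.hom_int_pow [OF jh y] by simp
    finally have "j (hom_induced q ?S {} ?S {} f y) = j (y [^]\<^bsub>G\<^esub> d)" using c1 by simp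
    moreover have "hom_induced q ?S {} ?S {} f y \<in> carrier G"
      using y by (simp add: G_def hom_induced_reduced)
    ultimately show ?thesis using jI(3) y G.int_pow_closed by (meson inj_onD)
  qed
  then show ?thesis
    unfolding d_def by (intro Brouwer_degree2_unique [OF cf]) (simp add: G_def q_def)
qed


lemma susp:
  fixes f :: "(nat \<Rightarrow> real) \<Rightarrow> nat \<Rightarrow> real"
  assumes cf: "continuous_map (nsphere (Suc n)) (nsphere (Suc n)) f"
  and sg: "\<And>x. x \<in> topspace (nsphere (Suc n)) \<Longrightarrow>
     (0 \<le> x (Suc n) \<longrightarrow> 0 \<le> f x (Suc n)) \<and> (x (Suc n) \<le> 0 \<longrightarrow> f x (Suc n) \<le> 0)"
  shows "Brouwer_degree2 (Suc n) f = Brouwer_degree2 n f \<and> continuous_map (nsphere n) (nsphere n) f"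
proof -
  define g where "g = (\<lambda>x. if x \<in> topspace (nsphere (Suc n)) then f x else x)"
  have tsub: "topspace (nsphere n) = topspace (nsphere (Suc n)) \<inter> {x. x (Suc n) = 0}"
    by (metis subtopology_nsphere_equator topspace_subtopology)
  have cg: "continuous_map (nsphere (Suc n)) (nsphere (Suc n)) g"
    using cf by (rule continuous_map_eq) (simp add: g_def)
  have gU: "g \<in> {x. x (Suc n) \<ge> 0} \<rightarrow> {x. x (Suc n) \<ge> 0}"
    using sg by (auto simp: g_def)
  have gL: "g \<in> {x. x (Suc n) \<le> 0} \<rightarrow> {x. x (Suc n) \<le> 0}"
    using sg by (auto simp: g_def)
  have d1: "Brouwer_degree2 (Suc n) f = Brouwer_degree2 (Suc n) g"
    by (rule Brouwer_degree2_eq) (simp add: g_def)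
  have d2: "Brouwer_degree2 n f = Brouwer_degree2 n g"
    by (rule Brouwer_degree2_eq) (use tsub in \<open>simp add: g_def\<close>)
  have "continuous_map (subtopology (nsphere (Suc n)) {x. x (Suc n) = 0})
          (subtopology (nsphere (Suc n)) {x. x (Suc n) = 0}) f"
  proof (rule continuous_map_into_subtopology)
    show "continuous_map (subtopology (nsphere (Suc n)) {x. x (Suc n) = 0}) (nsphere (Suc n)) f"
      using cf by (rule continuous_map_from_subtopology)
    show "f \<in> topspace (subtopology (nsphere (Suc n)) {x. x (Suc n) = 0}) \<rightarrow> {x. x (Suc n) = 0}"
    proof clarsimp
      fix x assume "x \<in> topspace (nsphere (Suc n))" "x (Suc n) = 0"
      then show "f x (Suc n) = 0" using sg [of x] by auto
    qed
  qed
  then show ?thesis using susp_core [OF cg gU gL] d1 d2 by (simp add: subtopology_nsphere_equator)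
qed

lemma tendsto_meval2 [tendsto_intros]:
  assumes "(f \<longlongrightarrow> a) F" "(g \<longlongrightarrow> b) F"
  shows "((\<lambda>x. meval2 c (f x) (g x)) \<longlongrightarrow> meval2 c a b) F"
  unfolding meval2_def case_prod_beta
  by (intro tendsto_intros assms)


lemma ts3: "x \<in> topspace (nsphere 3) \<longleftrightarrow> (x 0)\<^sup>2 + (x 1)\<^sup>2 + (x 2)\<^sup>2 + (x 3)\<^sup>2 = 1 \<and> (\<forall>i>3. x i = 0)"
  by (simp add: nsphere eval_nat_numeral add.assoc)
lemma ts1: "x \<in> topspace (nsphere 1) \<longleftrightarrow> (x 0)\<^sup>2 + (x 1)\<^sup>2 = 1 \<and> (\<forall>i>1. x i = 0)"
  by (simp add: nsphere)
lemma ts2: "x \<in> topspace (nsphere 2) \<longleftrightarrow> (x 0)\<^sup>2 + (x 1)\<^sup>2 + (x 2)\<^sup>2 = 1 \<and> (\<forall>i>2. x i = 0)"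
  by (simp add: nsphere eval_nat_numeral add.assoc)

theorem lemma8:
  fixes c :: mixed_poly2 and \<alpha> :: complex
  assumes "mixed_poly2 c"
    and "isolated_root (\<lambda>z1. meval2 c z1 0) \<alpha>"
  shows "(\<alpha>, 0) \<in> {(z1, z2). meval2 c z1 z2 = 0} \<inter> {(z1, z2). z2 = 0}
    \<and> I_top (meval2 c) (\<lambda>z1 z2. z2) (\<alpha>, 0) = sm (\<lambda>z1. meval2 c z1 0) \<alpha>"
proof -
  define h where "h = (\<lambda>z1. meval2 c z1 0)"
  from assms(2) obtain e where e: "e > 0"
    and eh: "\<And>u. 0 < cmod (u - \<alpha>) \<Longrightarrow> cmod (u - \<alpha>) < e \<Longrightarrow> h u \<noteq> 0" and h0: "h \<alpha> = 0"
    unfolding isolated_root_def h_def by blast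
  have key: "sphere3_deg (meval2 c) (\<lambda>z1 z2. z2) (\<alpha>, 0) \<epsilon> = circle_deg h \<alpha> \<epsilon>"
    if ep: "0 < \<epsilon>" "\<epsilon> < e" for \<epsilon>
  proof -
    define Z1 where "Z1 = (\<lambda>x::nat\<Rightarrow>real. \<alpha> + of_real \<epsilon> * Complex (x 0) (x 1))"
    define Z2 where "Z2 = (\<lambda>x::nat\<Rightarrow>real. 0 + of_real \<epsilon> * Complex (x 2) (x 3))"
    define U where "U = (\<lambda>x. meval2 c (Z1 x) (Z2 x))"
    define N where "N = (\<lambda>x. sqrt ((Re (U x))\<^sup>2 + (Im (U x))\<^sup>2 + (Re (Z2 x))\<^sup>2 + (Im (Z2 x))\<^sup>2))"
    define \<Phi> where "\<Phi> = (\<lambda>x. (\<lambda>i::nat. if i = 0 then Re (U x) / N x else if i = 1 then Im (U x) / N x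
             else if i = 2 then Re (Z2 x) / N x else if i = 3 then Im (Z2 x) / N x else 0))"
    have sd: "sphere3_deg (meval2 c) (\<lambda>z1 z2. z2) (\<alpha>, 0) \<epsilon> = Brouwer_degree2 3 \<Phi>"
      unfolding sphere3_deg_def Let_def fst_conv snd_conv
      by (rule arg_cong [where f = "Brouwer_degree2 3"]) (simp only: \<Phi>_def N_def U_def Z1_def Z2_def)
    have ReZ2: "Re (Z2 x) = \<epsilon> * x 2" "Im (Z2 x) = \<epsilon> * x 3" for x by (simp_all add: Z2_def)
    have Npos: "N x > 0" if x: "x \<in> topspace (nsphere 3)" for x
    proof (rule ccontr)
      assume "\<not> N x > 0"
      moreover have "N x \<ge> 0" unfolding N_def by (simp add: add_nonneg_nonneg)
      ultimately have "N x = 0" by linarith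
      then have "(Re (U x))\<^sup>2 + (Im (U x))\<^sup>2 + (Re (Z2 x))\<^sup>2 + (Im (Z2 x))\<^sup>2 = 0" by (simp add: N_def add_nonneg_nonneg)
      then have z: "Re (U x) = 0" "Im (U x) = 0" "Re (Z2 x) = 0" "Im (Z2 x) = 0"
        by (simp_all add: add_nonneg_eq_0_iff add_nonneg_nonneg)
      then have x23: "x 2 = 0" "x 3 = 0" using ep ReZ2 by auto
      then have x01: "(x 0)\<^sup>2 + (x 1)\<^sup>2 = 1" using x by (simp add: ts3)
      have "Z2 x = 0" by (simp add: Z2_def x23 complex_eq_iff)
      then have Uh: "U x = h (Z1 x)" by (simp add: U_def h_def)
      have "cmod (Z1 x - \<alpha>) = \<epsilon> * cmod (Complex (x 0) (x 1))"
        using ep by (simp add: Z1_def norm_mult)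
      also have "cmod (Complex (x 0) (x 1)) = 1" using x01 by (simp add: cmod_def)
      finally have "cmod (Z1 x - \<alpha>) = \<epsilon>" by simp
      then have "h (Z1 x) \<noteq> 0" using eh [of "Z1 x"] ep by simp
      moreover have "U x = 0" using z by (simp add: complex_eq_iff)
      ultimately show False using Uh by simp
    qed
    have base: "((\<lambda>y. y k) \<longlongrightarrow> x k) (atin (nsphere 3) x)" if "x \<in> topspace (nsphere 3)" for k x
      using continuous_map_nsphere_projection [of 3 k, unfolded continuous_map_atin] that by simp
    have tU: "(U \<longlongrightarrow> U x) (atin (nsphere 3) x)" if "x \<in> topspace (nsphere 3)" for x
      unfolding U_def Z1_def Z2_def by (intro tendsto_intros base that)
    have tZ: "(Z2 \<longlongrightarrow> Z2 x) (atin (nsphere 3) x)" if "x \<in> topspace (nsphere 3)" for x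
      unfolding Z2_def by (intro tendsto_intros base that)
    have tN: "(N \<longlongrightarrow> N x) (atin (nsphere 3) x)" if "x \<in> topspace (nsphere 3)" for x
      unfolding N_def by (intro tendsto_intros tU tZ that)
    have cmk: "continuous_map (nsphere 3) euclideanreal (\<lambda>y. \<Phi> y k)" for k
      unfolding continuous_map_atin limitin_canonical_iff
    proof
      fix x assume x: "x \<in> topspace (nsphere 3)"
      have N0: "N x \<noteq> 0" using Npos [OF x] by simp
      show "((\<lambda>y. \<Phi> y k) \<longlongrightarrow> \<Phi> x k) (atin (nsphere 3) x)"
        unfolding \<Phi>_def
        by (cases "k = 0"; cases "k = 1"; cases "k = 2"; cases "k = 3")
           (simp_all add: tendsto_divide tendsto_Re tendsto_Im tU tZ tN x N0)
    qed
    have cont3: "continuous_map (nsphere 3) (nsphere 3) \<Phi>"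
    proof -
      have "continuous_map (nsphere 3) (powertop_real UNIV) \<Phi>"
        using cmk by (simp add: continuous_map_componentwise_UNIV)
      moreover have "\<Phi> x \<in> topspace (nsphere 3)" if x: "x \<in> topspace (nsphere 3)" for x
      proof -
        have np: "N x > 0" using Npos [OF x] .
        have N2: "(N x)\<^sup>2 = (Re (U x))\<^sup>2 + (Im (U x))\<^sup>2 + (Re (Z2 x))\<^sup>2 + (Im (Z2 x))\<^sup>2"
          unfolding N_def by (simp add: add_nonneg_nonneg)
        have "(N x)\<^sup>2 \<noteq> 0" using np by simp
        with np N2 show ?thesis unfolding ts3 \<Phi>_def
          by (simp add: power_divide flip: add_divide_distrib)
      qed
      ultimately show ?thesis
        by (simp add: nsphere [of 3] continuous_map_in_subtopology del: nsphere)
    qed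
    have s3: "(0 \<le> x (Suc 2) \<longrightarrow> 0 \<le> \<Phi> x (Suc 2)) \<and> (x (Suc 2) \<le> 0 \<longrightarrow> \<Phi> x (Suc 2) \<le> 0)"
      if x: "x \<in> topspace (nsphere (Suc 2))" for x
    proof -
      have "N x > 0" using Npos x by (simp add: eval_nat_numeral)
      then show ?thesis using ep
        by (simp add: \<Phi>_def ReZ2 eval_nat_numeral divide_nonneg_pos divide_nonpos_pos mult_nonneg_nonpos)
    qed
    have cont3': "continuous_map (nsphere (Suc 2)) (nsphere (Suc 2)) \<Phi>"
      using cont3 by (simp add: eval_nat_numeral)
    from susp [OF cont3' s3] have d32: "Brouwer_degree2 3 \<Phi> = Brouwer_degree2 2 \<Phi>"
      and cont2: "continuous_map (nsphere (Suc 1)) (nsphere (Suc 1)) \<Phi>"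
      by (simp_all add: eval_nat_numeral)
    have t23: "x \<in> topspace (nsphere 3)" if "x \<in> topspace (nsphere 2)" for x
      using that by (simp add: ts2 ts3)
    have s2: "(0 \<le> x (Suc 1) \<longrightarrow> 0 \<le> \<Phi> x (Suc 1)) \<and> (x (Suc 1) \<le> 0 \<longrightarrow> \<Phi> x (Suc 1) \<le> 0)"
      if x: "x \<in> topspace (nsphere (Suc 1))" for x
    proof -
      have "N x > 0" using Npos t23 x by (simp add: eval_nat_numeral)
      then show ?thesis using ep
        by (simp add: \<Phi>_def ReZ2 eval_nat_numeral divide_nonneg_pos divide_nonpos_pos mult_nonneg_nonpos)
    qed
    from susp [OF cont2 s2] have d21: "Brouwer_degree2 2 \<Phi> = Brouwer_degree2 1 \<Phi>"
      by (simp add: eval_nat_numeral)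
    have d1: "Brouwer_degree2 1 \<Phi> = circle_deg h \<alpha> \<epsilon>"
      unfolding circle_deg_def
    proof (rule Brouwer_degree2_eq)
      fix x assume x: "x \<in> topspace (nsphere 1)"
      then have x23: "x 2 = 0" "x 3 = 0" unfolding ts1 by auto
      then have "Z2 x = 0" by (simp add: Z2_def complex_eq_iff)
      then have "U x = h (Z1 x)" by (simp add: U_def h_def)
      moreover have "N x = cmod (U x)" by (simp add: N_def ReZ2 x23 cmod_def)
      ultimately show "\<Phi> x = (let w = h (\<alpha> + of_real \<epsilon> * Complex (x 0) (x 1)); v = w / of_real (cmod w)
           in (\<lambda>i. if i = 0 then Re v else if i = 1 then Im v else 0))"
        by (auto simp: \<Phi>_def Let_def Z1_def ReZ2 x23 Re_divide_of_real Im_divide_of_real)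
    qed
    show ?thesis using sd d32 d21 d1 by simp
  qed
  have ev: "\<forall>\<^sub>F \<epsilon> in at_right 0. sphere3_deg (meval2 c) (\<lambda>z1 z2. z2) (\<alpha>, 0) \<epsilon> = circle_deg h \<alpha> \<epsilon>"
    unfolding eventually_at_right_field using e key by blast
  have "(\<lambda>d. \<forall>\<^sub>F \<epsilon> in at_right 0. sphere3_deg (meval2 c) (\<lambda>z1 z2. z2) (\<alpha>, 0) \<epsilon> = d)
       = (\<lambda>d. \<forall>\<^sub>F \<epsilon> in at_right 0. circle_deg h \<alpha> \<epsilon> = d)"
  proof (rule ext, rule iffI)
    fix d assume "\<forall>\<^sub>F \<epsilon> in at_right 0. sphere3_deg (meval2 c) (\<lambda>z1 z2. z2) (\<alpha>, 0) \<epsilon> = d"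
    with ev show "\<forall>\<^sub>F \<epsilon> in at_right 0. circle_deg h \<alpha> \<epsilon> = d" by eventually_elim simp
  next
    fix d assume "\<forall>\<^sub>F \<epsilon> in at_right 0. circle_deg h \<alpha> \<epsilon> = d"
    with ev show "\<forall>\<^sub>F \<epsilon> in at_right 0. sphere3_deg (meval2 c) (\<lambda>z1 z2. z2) (\<alpha>, 0) \<epsilon> = d" by eventually_elim simp
  qed
  then have "I_top (meval2 c) (\<lambda>z1 z2. z2) (\<alpha>, 0) = sm h \<alpha>"
    unfolding I_top_def sm_def by simp
  then show ?thesis using h0 by (simp add: h_def)
qed

end
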